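(* In the setting described in the context, assume $0\notin X$ and that Assumption A2 holds. Then for each $i=1,\dots,K$ the function $H_i(x):=F_i(g_i(x))$ is concave on the convex hull $\mathrm{conv}\,S(p)$.
   Context: Setting. $N,K\ge1$; $X\subseteq\mathbb{R}^N$ nonempty closed convex; $D=(D_1,\dots,D_K)^T\in\mathbb{R}^K$; random vectors $v_1,\dots,v_K\in\mathbb{R}^N$, $V=[v_1,\dots,v_K]^T$; $p\in[0,1]$, $S(p):=\{x\in X:\mathbb{P}(Vx\le D)\ge p\}$. Each $v_i$ is elliptical: $v_i\overset{d}{=}\mu_i+A_iZ_i$, $A_iA_i^T=\Sigma_i$ positive definite, $Z_i$ spherical. For $x\ne0$, $\xi_i(x):=\frac{v_i^Tx-\mu_i^Tx}{\sqrt{x^T\Sigma_ix}}$ has a one-dimensional spherical distribution with distribution function $F_i$ independent of $x$, and $g_i(x):=\frac{D_i-\mu_i^Tx}{\sqrt{x^T\Sigma_ix}}$. For each $x\in X$ the joint distribution function of $(\xi_1(x),\dots,\xi_K(x))$ is $z\mapsto C_x(F_1(z_1),\dots,F_K(z_K))$ for a Gumbel–Hougaard copula $C_x(u)=\psi_x^{-1}(\sum_i\psi_x(u_i))$, $\psi_x(t)=(-\ln t)^{1/\kappa(x)}$, $\kappa:X\to(0,1]$. $r$-revealed-concavity with threshold $t^{**}(r)>0$: for $r<0$, $t\mapsto F(t^{1/r})$ concave on $(0,t^{**}(r)]$; for $r=0$, $t\mapsto F(e^t)$ concave on $[t^{**}(r),\infty)$; for $r>0$, $t\mapsto F(t^{1/r})$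 concave on $[t^{**}(r),\infty)$. Threshold values $\theta^*(b,\mu,\Sigma,r)$ for $r\ne0$ ($\lambda_{\min}$ least eigenvalue of $\Sigma$; for $\mu\ne0$, $1/\sqrt{\lambda_{\mu,\min}}=\max_{\|x\|=1}\frac{\mu^Tx}{\|\mu\|\sqrt{x^T\Sigma x}}$, $r^o=\frac{\|\mu\|^2}{(\mu^T\Sigma^{-1}\mu)\lambda_{\mu,\min}}$, $r^*=-2\sqrt{1/(r^o-1)+1}$): $0$ if $\mu=0,r<-1$; $\mu^T\Sigma^{-1}\mu$ if $\mu\ne0,b=0$; $\frac{1}{-1-r}[\mu^T\Sigma^{-1}\mu-(2+r)\|\mu\|^2/\lambda_{\min}]$ if $\mu\ne0,b<0,r\le-2$; $\mu^T\Sigma^{-1}\mu/(-1-r)$ if $\mu\ne0,b<0,-2<r<-1$; $\mu^T\Sigma^{-1}\mu+(2+r)\|\mu\|^2/\lambda_{\min}$ if $\mu\ne0,b<0,r\ge-1$; if $\mu\ne0,b>0,r<-1$: $c^2$ with $c=\sqrt{\frac{-r+2}{-r-2}}\sqrt{\mu^T\Sigma^{-1}\mu}$ when $r^o>1$ and $r\le r^*$, and $c=\frac{(-r)\|\mu\|/\sqrt{\lambda_{\mu,\min}}+\sqrt{(2+r)\|\mu\|^2/\lambda_{\mu,\min}+(-1-r)\mu^T\Sigma^{-1}\mu}}{-1-r}$ otherwise; undefined otherwise. Assumption A2: (1) for each $i$ there is $r_i\in\mathbb{R}$ with: if $r_i\ne0$, $F_i$ is $r_i$-revealed-concave with threshold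 $t_i^{**}(r_i)$; if $r_i=0$, there is $\varepsilon_0\in(0,1)$ with $F_i$ $(-\varepsilon_0)$-revealed-concave with threshold $t_i^{**}(-\varepsilon_0)$; (2) $p>p^*:=\max\{\frac12,\max_iF_i(\sqrt{\theta_i^*}),\max_iF_i(t_i^{**}(r_i)^{1/r_i})\}$ where $\theta_i^*=\theta^*(D_i,\mu_i,\Sigma_i,r_i)$ (assumed defined) if $r_i\ne0$, and if $r_i=0$ one takes $\theta_i^*=\theta^*(D_i,\mu_i,\Sigma_i,-\varepsilon_0)$ and replaces $F_i(t_i^{**}(r_i)^{1/r_i})$ by $F_i(t_i^{**}(-\varepsilon_0)^{-1/\varepsilon_0})$. *)

theory Defs
  imports "HOL-Probability.Probability"
begin

text \<open>Gumbel--Hougaard copula C(u) = psi^{-1}(sum_i psi(u_i)) with psi(t) = (-ln t) powr (1/kappa),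
  psi^{-1}(s) = exp(-(s powr kappa)).  Since psi(0) = +infinity, C(u) = 0 as soon as some u_i = 0
  (made explicit because ln 0 = 0 in Isabelle).\<close>
definition gumbel_copula :: "real \<Rightarrow> ('k::finite \<Rightarrow> real) \<Rightarrow> real" where
  "gumbel_copula \<kappa> u =
     (if \<exists>i. u i = 0 then 0
      else exp (- ((\<Sum>i\<in>UNIV. (- ln (u i)) powr (1 / \<kappa>)) powr \<kappa>)))"

definition revealed_concave :: "(real \<Rightarrow> real) \<Rightarrow> real \<Rightarrow> real \<Rightarrow> bool" where
  "revealed_concave F r t \<longleftrightarrow> t > 0 \<and>
     (if r < 0 then concave_on {0<..t} (\<lambda>s. F (s powr (1 / r)))
      else if r = 0 then concave_on {t..} (\<lambda>s. F (exp s))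
      else concave_on {t..} (\<lambda>s. F (s powr (1 / r))))"

definition pos_def_matrix :: "real^'n^'n \<Rightarrow> bool" where
  "pos_def_matrix S \<longleftrightarrow> transpose S = S \<and> (\<forall>x. x \<noteq> 0 \<longrightarrow> x \<bullet> (S *v x) > 0)"

definition spherical_rv :: "'a measure \<Rightarrow> ('a \<Rightarrow> real^'n) \<Rightarrow> bool" where
  "spherical_rv M Z \<longleftrightarrow> Z \<in> borel_measurable M \<and>
     (\<forall>Q::real^'n^'n. orthogonal_matrix Q \<longrightarrow> distr M borel (\<lambda>w. Q *v Z w) = distr M borel Z)"

definition lambda_min :: "real^'n^'n \<Rightarrow> real" where
  "lambda_min S = Inf {l. \<exists>v. v \<noteq> 0 \<and> S *v v = l *\<^sub>R v}"

definition lambda_mu_min :: "real^'n \<Rightarrow> real^'n^'n \<Rightarrow> real" where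
  "lambda_mu_min \<mu> S =
     1 / (Sup {(\<mu> \<bullet> x) / (norm \<mu> * sqrt (x \<bullet> (S *v x))) | x. norm x = 1})\<^sup>2"

definition quad_inv :: "real^'n \<Rightarrow> real^'n^'n \<Rightarrow> real" where
  "quad_inv \<mu> S = \<mu> \<bullet> (matrix_inv S *v \<mu>)"

definition theta_star :: "real \<Rightarrow> real^'n \<Rightarrow> real^'n^'n \<Rightarrow> real \<Rightarrow> real option" where
  "theta_star b \<mu> S r =
    (let q = quad_inv \<mu> S; lm = lambda_min S; lmu = lambda_mu_min \<mu> S;
         ro = (norm \<mu>)\<^sup>2 / (q * lmu); rs = - 2 * sqrt (1 / (ro - 1) + 1);
         c = (if ro > 1 \<and> r \<le> rs then sqrt ((- r + 2) / (- r - 2)) * sqrt q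
              else ((- r) * norm \<mu> / sqrt lmu
                    + sqrt ((2 + r) * (norm \<mu>)\<^sup>2 / lmu + (- 1 - r) * q)) / (- 1 - r))
     in if r = 0 then None
        else if \<mu> = 0 then (if r < -1 then Some 0 else None)
        else if b = 0 then Some q
        else if b < 0 then
          (if r \<le> -2 then Some (1 / (- 1 - r) * (q - (2 + r) * (norm \<mu>)\<^sup>2 / lm))
           else if r < -1 then Some (q / (- 1 - r))
           else Some (q + (2 + r) * (norm \<mu>)\<^sup>2 / lm))
        else (if r < -1 then Some (c\<^sup>2) else None))"

end

theory Submission
  imports Defs
begin

lemma Phi_nonneg:
  fixes r s0 g \<omega> :: real
  assumes r: "r < -1" and s0: "s0 \<ge> 0" and om: "\<omega>\<^sup>2 \<le> s0\<^sup>2"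
    and g: "g \<ge> s0 * (1 - r) / (-1 - r)"
  shows "(2 - r) * \<omega>\<^sup>2 - 2 * r * g * \<omega> - (r + 1) * g\<^sup>2 - s0\<^sup>2 \<ge> 0"
proof -
  define C where "C = s0 * (1 - r) / (-1 - r)"
  have C1: "C \<ge> s0" using r s0 unfolding C_def by (simp add: field_simps)
  have C2: "(-r) * C \<ge> (2 - r) * s0" using r s0 unfolding C_def by (simp add: field_simps)
  have gC: "g \<ge> C" using g C_def by simp
  have om1: "\<omega> \<ge> - s0" using om s0 power2_le_iff_abs_le by fastforce
  have P1: "(-1 - r) * (g - s0) * (g - C) \<ge> 0" using r gC C1 by simp
  have P1': "(-1 - r) * (g - s0) * (g - C) = (-1 - r) * g\<^sup>2 + 2 * r * g * s0 + (1 - r) * s0\<^sup>2"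
    using r unfolding C_def by (simp add: field_simps power2_eq_square)
  have P2: "(\<omega> + s0) * ((2 - r) * (\<omega> - s0) - 2 * r * g) \<ge> 0"
  proof -
    have "(-r) * g \<ge> (-r) * C" using gC r by (intro mult_left_mono) auto
    moreover have "(2 - r) * (\<omega> - s0) \<ge> (2 - r) * (-2 * s0)" using om1 r by (intro mult_left_mono) auto
    ultimately have "(2 - r) * (\<omega> - s0) - 2 * r * g \<ge> 0" using C2 by (simp add: algebra_simps)
    thus ?thesis using om1 by simp
  qed
  have "(2 - r) * \<omega>\<^sup>2 - 2 * r * g * \<omega> - (r + 1) * g\<^sup>2 - s0\<^sup>2
      = ((-1 - r) * g\<^sup>2 + 2 * r * g * s0 + (1 - r) * s0\<^sup>2) + (\<omega> + s0) * ((2 - r) * (\<omega> - s0) - 2 * r * g)"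
    by (simp add: algebra_simps power2_eq_square)
  thus ?thesis using P1 P1' P2 by linarith
qed

lemma core:
  fixes r q g \<omega> m a \<gamma> :: real
  assumes r: "r < -1"
    and k2: "q - \<omega>\<^sup>2 \<ge> 0"
    and Phi: "(2 - r) * \<omega>\<^sup>2 - 2 * r * g * \<omega> - (r + 1) * g\<^sup>2 - q \<ge> 0"
    and G: "(m - a * \<omega>)\<^sup>2 \<le> (q - \<omega>\<^sup>2) * (\<gamma> - a\<^sup>2)"
    and Z: "\<gamma> - a\<^sup>2 \<ge> 0"
  shows "(r - 1) * m\<^sup>2 + 2 * r * g * m * a + (r + 2) * g\<^sup>2 * a\<^sup>2 - g\<^sup>2 * \<gamma> \<le> 0"
proof -
  define k where "k = q - \<omega>\<^sup>2"
  define s where "s = m - a * \<omega>"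
  define z where "z = \<gamma> - a\<^sup>2"
  define Aaa where "Aaa = (r - 1) * \<omega>\<^sup>2 + 2 * r * g * \<omega> + (r + 1) * g\<^sup>2"
  define Aas where "Aas = (r - 1) * \<omega> + r * g"
  have kA: "k + Aaa \<le> 0" using Phi unfolding k_def Aaa_def by (simp add: algebra_simps)
  have E: "(r - 1) * m\<^sup>2 + 2 * r * g * m * a + (r + 2) * g\<^sup>2 * a\<^sup>2 - g\<^sup>2 * \<gamma>
      = Aaa * a\<^sup>2 + 2 * Aas * a * s + (r - 1) * s\<^sup>2 - g\<^sup>2 * z"
    unfolding Aaa_def Aas_def s_def z_def by (simp add: algebra_simps power2_eq_square)
  have G': "s\<^sup>2 \<le> k * z" using G unfolding s_def k_def z_def by simp
  have k0: "k \<ge> 0" "z \<ge> 0" using k2 Z unfolding k_def z_def by auto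
  show ?thesis
  proof (cases "k = 0")
    case True
    then have "s\<^sup>2 \<le> 0" using G' by simp
    then have "s = 0" by simp
    moreover have "Aaa * a\<^sup>2 \<le> 0" using kA True by (simp add: mult_nonpos_nonneg)
    moreover have "g\<^sup>2 * z \<ge> 0" using k0 by simp
    ultimately show ?thesis unfolding E by simp
  next
    case False
    then have kp: "k > 0" using k0 by simp
    define c0 where "c0 = k * Aaa"
    define c1 where "c1 = k * Aas"
    define c2 where "c2 = k * (r - 1) - g\<^sup>2"
    have c2n: "c2 < 0" unfolding c2_def using kp r
      by (smt (verit) mult_pos_neg zero_le_power2)
    have det: "c0 * c2 - c1\<^sup>2 = - k * g\<^sup>2 * (k + Aaa)"
      unfolding c0_def c1_def c2_def Aaa_def Aas_def by (simp add: algebra_simps power2_eq_square)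
    have detn: "c0 * c2 - c1\<^sup>2 \<ge> 0" unfolding det using kp kA
      by (simp add: mult_nonneg_nonpos zero_le_mult_iff)
    have sq: "c2 * (c0 * a\<^sup>2 + 2 * c1 * a * s + c2 * s\<^sup>2) = (c2 * s + c1 * a)\<^sup>2 + (c0 * c2 - c1\<^sup>2) * a\<^sup>2"
      by (simp add: algebra_simps power2_eq_square)
    have "c2 * (c0 * a\<^sup>2 + 2 * c1 * a * s + c2 * s\<^sup>2) \<ge> 0" unfolding sq using detn by simp
    hence RHS: "c0 * a\<^sup>2 + 2 * c1 * a * s + c2 * s\<^sup>2 \<le> 0" using c2n
      by (simp add: mult_le_0_iff zero_le_mult_iff)
    have "k * (Aaa * a\<^sup>2 + 2 * Aas * a * s + (r - 1) * s\<^sup>2 - g\<^sup>2 * z)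
        = (c0 * a\<^sup>2 + 2 * c1 * a * s + c2 * s\<^sup>2) + g\<^sup>2 * (s\<^sup>2 - k * z)"
      unfolding c0_def c1_def c2_def by (simp add: algebra_simps)
    also have "\<dots> \<le> 0" using RHS G' by (smt (verit) mult_nonneg_nonpos zero_le_power2)
    finally have "k * (Aaa * a\<^sup>2 + 2 * Aas * a * s + (r - 1) * s\<^sup>2 - g\<^sup>2 * z) \<le> 0" .
    then show ?thesis unfolding E using kp by (simp add: mult_le_0_iff)
  qed
qed

lemma deriv_facts:
  fixes r l0 m \<alpha> \<beta> \<gamma> t :: real
  defines "L \<equiv> \<lambda>t. l0 - t * m"
    and "Q \<equiv> \<lambda>t. \<alpha> + 2 * t * \<beta> + t * t * \<gamma>"
  defines "f \<equiv> \<lambda>t. exp (r * (ln (L t) - ln (Q t) / 2))"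
    and "p1 \<equiv> \<lambda>t. r * (- m / L t - (\<beta> + \<gamma> * t) / Q t)"
    and "p2 \<equiv> \<lambda>t. r * (- m * m / (L t * L t) - (\<gamma> * Q t - 2 * (\<beta> + \<gamma> * t) * (\<beta> + \<gamma> * t)) / (Q t * Q t))"
  assumes L: "L t > 0" and Q: "Q t > 0"
  shows "(f has_real_derivative f t * p1 t) (at t)"
    and "((\<lambda>t. f t * p1 t) has_real_derivative f t * (p1 t * p1 t + p2 t)) (at t)"
proof -
  have dL: "(L has_real_derivative - m) (at t)" unfolding L_def
    by (auto intro!: derivative_eq_intros)
  have dQ: "(Q has_real_derivative 2 * (\<beta> + \<gamma> * t)) (at t)" unfolding Q_def
    by (auto intro!: derivative_eq_intros simp: algebra_simps)
  have dlnL: "((\<lambda>t. ln (L t)) has_real_derivative - m / L t) (at t)"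
    using DERIV_chain2[OF DERIV_ln[OF L] dL] by (simp add: divide_inverse mult.commute)
  show d1: "(f has_real_derivative f t * p1 t) (at t)"
  proof -
    have dlnQ: "((\<lambda>t. ln (Q t)) has_real_derivative 2 * (\<beta> + \<gamma> * t) / Q t) (at t)"
      using DERIV_chain2[OF DERIV_ln[OF Q] dQ] by (simp add: divide_inverse mult.commute)
    have "((\<lambda>t. r * (ln (L t) - ln (Q t) / 2)) has_real_derivative r * (- m / L t - 2 * (\<beta> + \<gamma> * t) / Q t / 2)) (at t)"
      using DERIV_cmult[OF DERIV_diff[OF dlnL DERIV_cdivide[OF dlnQ, of 2]], of r] by simp
    then have "(f has_real_derivative f t * (r * (- m / L t - 2 * (\<beta> + \<gamma> * t) / Q t / 2))) (at t)"
      unfolding f_def by (rule DERIV_fun_exp)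
    then show ?thesis unfolding p1_def by (rule DERIV_cong) (use Q in \<open>simp add: field_simps\<close>)
  qed
  have dp1: "(p1 has_real_derivative p2 t) (at t)"
  proof -
    have "((\<lambda>t. - m / L t) has_real_derivative - m * m / (L t * L t)) (at t)"
      using DERIV_divide[OF DERIV_const dL, of "-m"] L by (simp add: power2_eq_square)
    moreover have "((\<lambda>t. (\<beta> + \<gamma> * t) / Q t) has_real_derivative
        (\<gamma> * Q t - 2 * (\<beta> + \<gamma> * t) * (\<beta> + \<gamma> * t)) / (Q t * Q t)) (at t)"
    proof -
      have "((\<lambda>t. \<beta> + \<gamma> * t) has_real_derivative \<gamma>) (at t)" by (auto intro!: derivative_eq_intros)
      from DERIV_divide[OF this dQ] Q show ?thesis by (simp add: power2_eq_square algebra_simps)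
    qed
    ultimately show ?thesis unfolding p1_def p2_def
      by (intro DERIV_cmult DERIV_diff)
  qed
  show "((\<lambda>t. f t * p1 t) has_real_derivative f t * (p1 t * p1 t + p2 t)) (at t)"
    using DERIV_mult[OF d1 dp1] by (simp add: algebra_simps)
qed

lemma seg_convex:
  fixes a e w :: "'a::real_inner" and r b C :: real
  assumes r: "r < -1" and C0: "C \<ge> 0" and C: "C \<ge> norm w * (1 - r) / (-1 - r)"
    and nz: "\<And>t. t \<in> {0..1} \<Longrightarrow> a + t *\<^sub>R e \<noteq> 0"
    and gt: "\<And>t. t \<in> {0..1} \<Longrightarrow> (b - w \<bullet> (a + t *\<^sub>R e)) / norm (a + t *\<^sub>R e) > C"
  shows "convex_on {0..1} (\<lambda>t. ((b - w \<bullet> (a + t *\<^sub>R e)) / norm (a + t *\<^sub>R e)) powr r)"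
proof -
  define l0 where "l0 = b - w \<bullet> a"
  define m where "m = w \<bullet> e"
  define \<alpha> where "\<alpha> = a \<bullet> a"
  define \<beta> where "\<beta> = a \<bullet> e"
  define \<gamma> where "\<gamma> = e \<bullet> e"
  define L where "L = (\<lambda>t::real. l0 - t * m)"
  define Q where "Q = (\<lambda>t::real. \<alpha> + 2 * t * \<beta> + t * t * \<gamma>)"
  define f where "f = (\<lambda>t. exp (r * (ln (L t) - ln (Q t) / 2)))"
  define p1 where "p1 = (\<lambda>t. r * (- m / L t - (\<beta> + \<gamma> * t) / Q t))"
  define p2 where "p2 = (\<lambda>t. r * (- m * m / (L t * L t) - (\<gamma> * Q t - 2 * (\<beta> + \<gamma> * t) * (\<beta> + \<gamma> * t)) / (Q t * Q t)))"
  have Qn: "Q t = (norm (a + t *\<^sub>R e))\<^sup>2" for t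
    unfolding Q_def \<alpha>_def \<beta>_def \<gamma>_def power2_norm_eq_inner
    by (simp add: inner_add_left inner_add_right inner_commute algebra_simps)
  have Ln: "L t = b - w \<bullet> (a + t *\<^sub>R e)" for t
    unfolding L_def l0_def m_def by (simp add: inner_add_right algebra_simps)
  have Bn: "\<beta> + \<gamma> * t = (a + t *\<^sub>R e) \<bullet> e" for t
    unfolding \<beta>_def \<gamma>_def by (simp add: inner_add_left)
  have C1: "C \<ge> 0" using C0 .
  have pos: "L t > 0 \<and> Q t > 0" if t: "t \<in> {0..1}" for t
  proof -
    have N: "norm (a + t *\<^sub>R e) > 0" using nz[OF t] by simp
    have "L t / norm (a + t *\<^sub>R e) > 0" using gt[OF t] C0 Ln by (metis order.strict_trans1)
    then have "L t > 0" using N by (simp add: zero_less_divide_iff)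
    then show ?thesis using N Qn by simp
  qed
  have key: "f t * (p1 t * p1 t + p2 t) \<ge> 0" if t: "t \<in> {0..1}" for t
  proof -
    define A where "A = a + t *\<^sub>R e"
    define N where "N = norm A"
    have Np: "N > 0" using nz[OF t] unfolding N_def A_def by simp
    define u where "u = (1 / N) *\<^sub>R A"
    have uu: "u \<bullet> u = 1" unfolding u_def N_def using Np N_def
      by (simp add: power2_norm_eq_inner[symmetric] power2_eq_square)
    define g where "g = L t / N"
    define \<omega> where "\<omega> = w \<bullet> u"
    define aa where "aa = e \<bullet> u"
    define q where "q = w \<bullet> w"
    have gC: "g > C" unfolding g_def N_def A_def using gt[OF t] Ln by simp
    have LgN: "L t = g * N" unfolding g_def using Np by simp
    have QN: "Q t = N * N" unfolding N_def A_def Qn by (simp add: power2_eq_square)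
    have BN: "\<beta> + \<gamma> * t = aa * N" unfolding Bn aa_def u_def N_def A_def using Np N_def A_def
      by (simp add: inner_commute)
    have k2: "\<omega>\<^sup>2 \<le> q" using Cauchy_Schwarz_ineq[of w u] uu unfolding \<omega>_def q_def by simp
    have s0: "(norm w)\<^sup>2 = q" unfolding q_def by (simp add: power2_norm_eq_inner)
    have Phi: "(2 - r) * \<omega>\<^sup>2 - 2 * r * g * \<omega> - (r + 1) * g\<^sup>2 - q \<ge> 0"
      using Phi_nonneg[of r "norm w" \<omega> g] r k2 s0 C gC by simp
    define U where "U = w - \<omega> *\<^sub>R u"
    define V where "V = e - aa *\<^sub>R u"
    have UV: "U \<bullet> V = m - aa * \<omega>" unfolding U_def V_def m_def \<omega>_def aa_def
      using uu by (simp add: inner_diff_left inner_diff_right inner_commute algebra_simps)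
    have UU: "U \<bullet> U = q - \<omega>\<^sup>2" unfolding U_def q_def \<omega>_def
      using uu by (simp add: inner_diff_left inner_diff_right inner_commute algebra_simps power2_eq_square)
    have VV: "V \<bullet> V = \<gamma> - aa\<^sup>2" unfolding V_def \<gamma>_def aa_def
      using uu by (simp add: inner_diff_left inner_diff_right inner_commute algebra_simps power2_eq_square)
    have G: "(m - aa * \<omega>)\<^sup>2 \<le> (q - \<omega>\<^sup>2) * (\<gamma> - aa\<^sup>2)"
      using Cauchy_Schwarz_ineq[of U V] UV UU VV by simp
    have Z: "\<gamma> - aa\<^sup>2 \<ge> 0" using VV by (metis inner_ge_zero)
    have E: "(r - 1) * m\<^sup>2 + 2 * r * g * m * aa + (r + 2) * g\<^sup>2 * aa\<^sup>2 - g\<^sup>2 * \<gamma> \<le> 0"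
      using core[OF r _ Phi G Z] k2 by simp
    have gp: "g > 0" using gC C0 by simp
    have id: "N\<^sup>2 * g\<^sup>2 * (p1 t * p1 t + p2 t) = r * ((r - 1) * m\<^sup>2 + 2 * r * g * m * aa + (r + 2) * g\<^sup>2 * aa\<^sup>2 - g\<^sup>2 * \<gamma>)"
      unfolding p1_def p2_def LgN QN BN using Np gp
      by (simp add: field_simps power2_eq_square)
    have "N\<^sup>2 * g\<^sup>2 * (p1 t * p1 t + p2 t) \<ge> 0" unfolding id using E r
      by (simp add: mult_nonpos_nonpos)
    moreover have pp: "N\<^sup>2 * g\<^sup>2 > 0" using Np gp by simp
    ultimately have "p1 t * p1 t + p2 t \<ge> 0" by (simp add: zero_le_mult_iff)
    moreover have "f t > 0" unfolding f_def by simp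
    ultimately show ?thesis by simp
  qed
  have cf: "convex_on {0..1} f"
  proof (rule convex_on_realI[where f' = "\<lambda>t. f t * p1 t"])
    show "connected {0..1::real}" by simp
    fix x assume x: "x \<in> {0..1::real}"
    show "(f has_real_derivative f x * p1 x) (at x)"
      using deriv_facts(1)[of l0 x m \<alpha> \<beta> \<gamma> r] pos[OF x]
      unfolding f_def p1_def L_def Q_def by simp
  next
    fix x y :: real assume x: "x \<in> {0..1}" and y: "y \<in> {0..1}" and xy: "x \<le> y"
    show "f x * p1 x \<le> f y * p1 y"
    proof (rule deriv_nonneg_imp_mono[where g = "\<lambda>t. f t * p1 t" and g' = "\<lambda>t. f t * (p1 t * p1 t + p2 t)"])
      fix s assume s: "s \<in> {x..y}"
      then have s01: "s \<in> {0..1}" using x y by auto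
      show "((\<lambda>t. f t * p1 t) has_real_derivative f s * (p1 s * p1 s + p2 s)) (at s)"
        using deriv_facts(2)[of l0 s m \<alpha> \<beta> \<gamma> r] pos[OF s01]
        unfolding f_def p1_def p2_def L_def Q_def by simp
      show "f s * (p1 s * p1 s + p2 s) \<ge> 0" using key[OF s01] .
    qed (use xy in auto)
  qed
  show ?thesis
  proof -
    define h where "h = (\<lambda>t. ((b - w \<bullet> (a + t *\<^sub>R e)) / norm (a + t *\<^sub>R e)) powr r)"
    have fh: "f t = h t" if t: "t \<in> {0..1}" for t
    proof -
      have LQ: "L t > 0" "Q t > 0" using pos[OF t] by auto
      have nq: "norm (a + t *\<^sub>R e) = sqrt (Q t)" using Qn by simp
      have hh: "h t = (L t / sqrt (Q t)) powr r" unfolding h_def nq Ln ..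
      have "ln (L t / sqrt (Q t)) = ln (L t) - ln (Q t) / 2"
        using LQ by (simp add: ln_div ln_sqrt)
      moreover have "L t / sqrt (Q t) > 0" using LQ by simp
      ultimately show ?thesis unfolding f_def hh powr_def using LQ by simp
    qed
    show ?thesis unfolding h_def[symmetric] convex_on_def
    proof (intro conjI ballI allI impI)
      show "convex {0..1::real}" by simp
      fix x y u v :: real
      assume x: "x \<in> {0..1}" and y: "y \<in> {0..1}" and u: "0 \<le> u" and v: "0 \<le> v" and uv: "u + v = 1"
      have xy: "u *\<^sub>R x + v *\<^sub>R y \<in> {0..1}"
        using convexD[OF convex_real_interval(5)[of 0 1] x y u v uv] by simp
      have "f (u *\<^sub>R x + v *\<^sub>R y) \<le> u * f x + v * f y"
        using cf x y u v uv unfolding convex_on_def by blast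
      then show "h (u *\<^sub>R x + v *\<^sub>R y) \<le> u * h x + v * h y"
        using fh[OF xy] fh[OF x] fh[OF y] by simp
    qed
  qed
qed

lemma form_T:
  fixes A S :: "real^'n^'n"
  assumes "A ** transpose A = S"
  shows "x \<bullet> (S *v y) = (transpose A *v x) \<bullet> (transpose A *v y)"
proof -
  have "S *v y = A *v (transpose A *v y)" using assms by (metis matrix_vector_mul_assoc)
  then have "x \<bullet> (S *v y) = (x v* A) \<bullet> (transpose A *v y)" by (simp add: dot_lmul_matrix)
  then show ?thesis by simp
qed

lemma posdef_inv:
  fixes S :: "real^'n^'n"
  assumes "pos_def_matrix S"
  shows "S *v (matrix_inv S *v v) = v"
proof -
  have inj: "inj ((*v) S)"
  proof (rule injI)
    fix x y assume "S *v x = S *v y"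
    then have "S *v (x - y) = 0" by (simp add: matrix_vector_mult_diff_distrib)
    then have "(x - y) \<bullet> (S *v (x - y)) = 0" by simp
    then show "x = y" using assms unfolding pos_def_matrix_def by (metis less_irrefl right_minus_eq)
  qed
  then have "\<exists>B. B ** S = mat 1" using matrix_left_invertible_injective by blast
  then have "invertible S" using invertible_left_inverse by blast
  then have "S ** matrix_inv S = mat 1" unfolding invertible_def matrix_inv_def by (rule someI_ex[THEN conjunct1])
  then show ?thesis by (simp add: matrix_vector_mul_assoc)
qed

lemma sym_form:
  fixes S :: "real^'n^'n"
  assumes "transpose S = S"
  shows "x \<bullet> (S *v y) = y \<bullet> (S *v x)"
proof -
  have "x \<bullet> (S *v y) = (x v* S) \<bullet> y" by (simp add: dot_lmul_matrix)
  also have "x v* S = transpose S *v x" by simp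
  finally show ?thesis using assms by (simp add: inner_commute)
qed

lemma lambda_min_facts:
  fixes S :: "real^'n^'n"
  assumes pd: "pos_def_matrix S"
  shows "lambda_min S > 0" "\<And>x. lambda_min S * (norm x)\<^sup>2 \<le> x \<bullet> (S *v x)"
proof -
  define f where "f = (\<lambda>x::real^'n. x \<bullet> (S *v x))"
  have symS: "transpose S = S" and pos: "\<And>x. x \<noteq> 0 \<Longrightarrow> f x > 0"
    using pd unfolding pos_def_matrix_def f_def by auto
  have sym: "x \<bullet> (S *v y) = y \<bullet> (S *v x)" for x y using sym_form[OF symS] .
  have fsc: "f (c *\<^sub>R x) = c\<^sup>2 * f x" for c x
    unfolding f_def by (simp add: matrix_vector_mult_scaleR power2_eq_square)
  have cont: "continuous_on (sphere (0::real^'n) 1) f" unfolding f_def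
    by (intro continuous_intros)
  have ne: "sphere (0::real^'n) 1 \<noteq> {}" by (simp add: sphere_def) (metis norm_sgn norm_zero sgn_zero zero_neq_one  vector_choose_size zero_le_one)
  obtain e where e: "e \<in> sphere 0 1" and emin: "\<And>y. y \<in> sphere 0 1 \<Longrightarrow> f e \<le> f y"
    using continuous_attains_inf[OF compact_sphere ne cont] by blast
  define \<rho> where "\<rho> = f e"
  have ne1: "norm e = 1" using e by simp
  have enz: "e \<noteq> 0" using ne1 by auto
  have rho_pos: "\<rho> > 0" unfolding \<rho>_def using pos[OF enz] .
  have bound: "\<rho> * (norm x)\<^sup>2 \<le> f x" for x
  proof (cases "x = 0")
    case True then show ?thesis unfolding f_def by simp
  next
    case False
    then have nx: "norm x > 0" by simp
    have "(1 / norm x) *\<^sub>R x \<in> sphere 0 1" using nx by simp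
    then have "\<rho> \<le> f ((1 / norm x) *\<^sub>R x)" unfolding \<rho>_def by (rule emin)
    also have "\<dots> = f x / (norm x)\<^sup>2" unfolding fsc by (simp add: power_divide)
    finally show ?thesis using nx by (simp add: field_simps)
  qed
  have eig: "S *v e = \<rho> *\<^sub>R e"
  proof (rule ccontr)
    define d where "d = S *v e - \<rho> *\<^sub>R e"
    assume "S *v e \<noteq> \<rho> *\<^sub>R e"
    then have dnz: "d \<noteq> 0" unfolding d_def by simp
    define D2 where "D2 = d \<bullet> d"
    have D2p: "D2 > 0" unfolding D2_def using dnz by simp
    define Pd where "Pd = f d - \<rho> * (norm d)\<^sup>2"
    have Pd0: "Pd \<ge> 0" unfolding Pd_def using bound[of d] by simp
    have expand: "f (e + t *\<^sub>R d) - \<rho> * (norm (e + t *\<^sub>R d))\<^sup>2 = 2 * t * D2 + t\<^sup>2 * Pd" for t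
    proof -
      have "f (e + t *\<^sub>R d) = f e + t * (e \<bullet> (S *v d)) + t * (d \<bullet> (S *v e)) + t\<^sup>2 * f d"
        unfolding f_def by (simp add: matrix_vector_right_distrib matrix_vector_mult_scaleR inner_add_left inner_add_right algebra_simps power2_eq_square)
      moreover have "e \<bullet> (S *v d) = d \<bullet> (S *v e)" by (rule sym)
      moreover have "(norm (e + t *\<^sub>R d))\<^sup>2 = 1 + 2 * t * (d \<bullet> e) + t\<^sup>2 * (norm d)\<^sup>2"
      proof -
        have ee: "e \<bullet> e = 1" using ne1 by (simp add: dot_square_norm)
        have "(norm (e + t *\<^sub>R d))\<^sup>2 = (e + t *\<^sub>R d) \<bullet> (e + t *\<^sub>R d)" by (simp only: power2_norm_eq_inner)
        also have "\<dots> = e \<bullet> e + 2 * t * (d \<bullet> e) + t\<^sup>2 * (d \<bullet> d)"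
          by (simp add: inner_add_left inner_add_right inner_commute algebra_simps power2_eq_square)
        finally show ?thesis using ee by (simp add: power2_norm_eq_inner)
      qed
      moreover have "d \<bullet> (S *v e) - \<rho> * (d \<bullet> e) = D2"
        unfolding D2_def d_def by (simp add: inner_diff_right)
      ultimately show ?thesis unfolding Pd_def \<rho>_def using ne1
        by (simp add: algebra_simps power2_eq_square)
    qed
    define t where "t = - D2 / (Pd + D2)"
    have tneg: "t < 0" unfolding t_def using D2p Pd0 by (simp add: divide_pos_pos)
    have "t * Pd > - D2" unfolding t_def using D2p Pd0 by (simp add: field_simps)
    then have "2 * D2 + t * Pd > 0" using D2p by linarith
    then have "t * (2 * D2 + t * Pd) < 0" using tneg by (simp add: mult_neg_pos)
    moreover have "t * (2 * D2 + t * Pd) = 2 * t * D2 + t\<^sup>2 * Pd" by (simp add: algebra_simps power2_eq_square)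
    moreover have "f (e + t *\<^sub>R d) - \<rho> * (norm (e + t *\<^sub>R d))\<^sup>2 \<ge> 0" using bound[of "e + t *\<^sub>R d"] by simp
    ultimately show False using expand[of t] by simp
  qed
  have lm: "lambda_min S = \<rho>" unfolding lambda_min_def
  proof (rule cInf_eq_minimum)
    show "\<rho> \<in> {l. \<exists>v. v \<noteq> 0 \<and> S *v v = l *\<^sub>R v}" using eig enz by blast
  next
    fix l assume "l \<in> {l. \<exists>v. v \<noteq> 0 \<and> S *v v = l *\<^sub>R v}"
    then obtain v where v: "v \<noteq> 0" "S *v v = l *\<^sub>R v" by blast
    have "f v = l * (norm v)\<^sup>2" unfolding f_def v(2) by (simp add: power2_norm_eq_inner)
    then have "\<rho> * (norm v)\<^sup>2 \<le> l * (norm v)\<^sup>2" using bound[of v] by simp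
    then show "\<rho> \<le> l" using v(1) by simp
  qed
  show "lambda_min S > 0" using lm rho_pos by simp
  show "lambda_min S * (norm x)\<^sup>2 \<le> x \<bullet> (S *v x)" for x using lm bound[of x] unfolding f_def by simp
qed
theorem lemma2p9:
  fixes M :: "'a measure"
    and X :: "(real^'n) set"
    and D :: "'k::finite \<Rightarrow> real"
    and v Z :: "'k \<Rightarrow> 'a \<Rightarrow> real^'n"
    and \<mu> :: "'k \<Rightarrow> real^'n"
    and A \<Sigma> :: "'k \<Rightarrow> real^'n^'n"
    and F :: "'k \<Rightarrow> real \<Rightarrow> real"
    and \<kappa> :: "real^'n \<Rightarrow> real"
    and p :: real
    and r eps0 tss \<theta> :: "'k \<Rightarrow> real"
  defines "\<xi> \<equiv> \<lambda>i x w. (v i w \<bullet> x - \<mu> i \<bullet> x) / sqrt (x \<bullet> (\<Sigma> i *v x))"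
    and "g \<equiv> \<lambda>i x. (D i - \<mu> i \<bullet> x) / sqrt (x \<bullet> (\<Sigma> i *v x))"
    and "S \<equiv> \<lambda>q. {x \<in> X. prob_space.prob M {w \<in> space M. \<forall>i. v i w \<bullet> x \<le> D i} \<ge> q}"
  assumes M: "prob_space M"
    and X: "X \<noteq> {}" "closed X" "convex X" "0 \<notin> X"
    and p: "0 \<le> p" "p \<le> 1"
    and v_meas: "\<And>i. v i \<in> borel_measurable M"
    and ellip: "\<And>i. spherical_rv M (Z i)"
      "\<And>i. distr M borel (v i) = distr M borel (\<lambda>w. \<mu> i + A i *v Z i w)"
      "\<And>i. A i ** transpose (A i) = \<Sigma> i" "\<And>i. pos_def_matrix (\<Sigma> i)"
    and F_cdf: "\<And>i x t. x \<noteq> 0 \<Longrightarrow> F i t = prob_space.prob M {w \<in> space M. \<xi> i x w \<le> t}"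
    and kappa: "\<And>x. x \<in> X \<Longrightarrow> 0 < \<kappa> x \<and> \<kappa> x \<le> 1"
    and copula: "\<And>x z. x \<in> X \<Longrightarrow>
        prob_space.prob M {w \<in> space M. \<forall>i. \<xi> i x w \<le> z i}
          = gumbel_copula (\<kappa> x) (\<lambda>i. F i (z i))"
    \<comment> \<open>Assumption A2 (1): exponents r i, eps0 i (used when r i = 0), thresholds tss i\<close>
    and A2_eps: "\<And>i. r i = 0 \<Longrightarrow> 0 < eps0 i \<and> eps0 i < 1"
    and A2_conc: "\<And>i. revealed_concave (F i) (if r i = 0 then - eps0 i else r i) (tss i)"
    \<comment> \<open>theta i = theta^*_i, assumed defined\<close>
    and A2_theta: "\<And>i. theta_star (D i) (\<mu> i) (\<Sigma> i) (if r i = 0 then - eps0 i else r i) = Some (\<theta> i)"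
    \<comment> \<open>Assumption A2 (2): p > p^*\<close>
    and A2_p: "p > max (1/2) (max (Max (range (\<lambda>i. F i (sqrt (\<theta> i)))))
                 (Max (range (\<lambda>i. F i (tss i powr (1 / (if r i = 0 then - eps0 i else r i)))))))"
  shows "\<forall>i. concave_on (convex hull (S p)) (\<lambda>x. F i (g i x))"
proof (intro allI)
  fix i
  interpret P: prob_space M by (rule M)
  define r' where "r' = (if r i = 0 then - eps0 i else r i)"
  have r'nz: "r' \<noteq> 0" using A2_eps[of i] by (auto simp: r'_def)
  have RC: "revealed_concave (F i) r' (tss i)" using A2_conc[of i] unfolding r'_def .
  have tss: "tss i > 0" using RC unfolding revealed_concave_def by simp
  define \<tau> where "\<tau> = tss i powr (1 / r')"
  have taupos: "\<tau> > 0" unfolding \<tau>_def using tss by simp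
  obtain x0 where x0: "x0 \<in> X" using X(1) by blast
  have x0nz: "x0 \<noteq> 0" using x0 X(4) by auto
  have xi_meas: "\<xi> i x \<in> borel_measurable M" for x
    unfolding \<xi>_def using v_meas[of i] by measurable
  have Fmono: "F i s \<le> F i t" if st: "s \<le> t" for s t
  proof -
    have "F i s = P.prob {w \<in> space M. \<xi> i x0 w \<le> s}" by (rule F_cdf[OF x0nz])
    also have "\<dots> \<le> P.prob {w \<in> space M. \<xi> i x0 w \<le> t}"
      by (rule P.finite_measure_mono) (use st xi_meas[of x0] in auto)
    also have "\<dots> = F i t" by (rule F_cdf[OF x0nz, symmetric])
    finally show ?thesis .
  qed
  have pdS: "x \<bullet> (\<Sigma> i *v x) > 0" if "x \<noteq> 0" for x
    using ellip(4)[of i] that unfolding pos_def_matrix_def by auto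
  have psd: "0 \<le> x \<bullet> (\<Sigma> i *v x)" for x
    using pdS[of x] by (cases "x = 0") auto
  have Sg: "x \<in> X \<and> F i (g i x) \<ge> p" if x: "x \<in> S p" for x
  proof -
    have xX: "x \<in> X" and pp: "p \<le> P.prob {w \<in> space M. \<forall>j. v j w \<bullet> x \<le> D j}"
      using x unfolding S_def by auto
    have xnz: "x \<noteq> 0" using xX X(4) by auto
    have "P.prob {w \<in> space M. \<forall>j. v j w \<bullet> x \<le> D j} \<le> P.prob {w \<in> space M. \<xi> i x w \<le> g i x}"
    proof (rule P.finite_measure_mono)
      show "{w \<in> space M. \<forall>j. v j w \<bullet> x \<le> D j} \<subseteq> {w \<in> space M. \<xi> i x w \<le> g i x}"
        unfolding \<xi>_def g_def using psd[of x] by (auto intro!: divide_right_mono)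
      show "{w \<in> space M. \<xi> i x w \<le> g i x} \<in> sets M" using xi_meas[of x] by measurable
    qed
    also have "\<dots> = F i (g i x)" by (rule F_cdf[OF xnz, symmetric])
    finally show ?thesis using pp xX by simp
  qed
  have pgt1: "F i (sqrt (\<theta> i)) < p"
  proof -
    have "F i (sqrt (\<theta> i)) \<le> Max (range (\<lambda>i. F i (sqrt (\<theta> i))))" by (rule Max_ge) auto
    then show ?thesis using A2_p by simp
  qed
  have pgt2: "F i \<tau> < p"
  proof -
    have "F i \<tau> \<le> Max (range (\<lambda>i. F i (tss i powr (1 / (if r i = 0 then - eps0 i else r i)))))"
      unfolding \<tau>_def r'_def by (rule Max_ge) auto
    then show ?thesis using A2_p unfolding \<tau>_def r'_def by simp
  qed
  have Sgt: "x \<in> X \<and> g i x > sqrt (\<theta> i) \<and> g i x > \<tau>" if x: "x \<in> S p" for x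
  proof -
    have "x \<in> X" "F i (g i x) \<ge> p" using Sg[OF x] by auto
    moreover have "g i x > sqrt (\<theta> i)"
      using Fmono[of "g i x" "sqrt (\<theta> i)"] pgt1 \<open>F i (g i x) \<ge> p\<close> by (meson not_le order.strict_trans2)
    moreover have "g i x > \<tau>"
      using Fmono[of "g i x" \<tau>] pgt2 \<open>F i (g i x) \<ge> p\<close> by (meson not_le order.strict_trans2)
    ultimately show ?thesis by simp
  qed
  define T where "T = transpose (A i)"
  define y where "y = matrix_inv (\<Sigma> i) *v \<mu> i"
  define w where "w = T *v y"
  have form: "a \<bullet> (\<Sigma> i *v b) = (T *v a) \<bullet> (T *v b)" for a b
    unfolding T_def by (rule form_T[OF ellip(3)])
  have symS: "transpose (\<Sigma> i) = \<Sigma> i" using ellip(4)[of i] unfolding pos_def_matrix_def by simp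
  have Sy: "\<Sigma> i *v y = \<mu> i" unfolding y_def by (rule posdef_inv[OF ellip(4)])
  have muw: "\<mu> i \<bullet> z = w \<bullet> (T *v z)" for z
  proof -
    have "w \<bullet> (T *v z) = y \<bullet> (\<Sigma> i *v z)" unfolding w_def form ..
    also have "\<dots> = z \<bullet> (\<Sigma> i *v y)" by (rule sym_form[OF symS])
    finally show ?thesis unfolding Sy by (simp add: inner_commute)
  qed
  have qw: "quad_inv (\<mu> i) (\<Sigma> i) = (norm w)\<^sup>2"
    unfolding quad_inv_def y_def[symmetric] muw w_def by (simp add: power2_norm_eq_inner)
  have NT: "sqrt (x \<bullet> (\<Sigma> i *v x)) = norm (T *v x)" for x
    unfolding form by (simp add: norm_eq_sqrt_inner)
  have Tnz: "T *v x \<noteq> 0" if "x \<noteq> 0" for x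
    using pdS[OF that] unfolding form by auto
  have gT: "g i x = (D i - w \<bullet> (T *v x)) / norm (T *v x)" for x
    unfolding g_def NT muw ..
  have gle: "g i x \<le> D i / norm (T *v x) + norm w" if "x \<noteq> 0" for x
  proof -
    have np: "norm (T *v x) > 0" using Tnz[OF that] by simp
    have "- (w \<bullet> (T *v x)) \<le> norm w * norm (T *v x)"
      using norm_cauchy_schwarz[of "- w" "T *v x"] by simp
    then have "- (w \<bullet> (T *v x)) / norm (T *v x) \<le> norm w"
      using np by (subst pos_divide_le_eq[OF np]) (simp add: mult.commute)
    then show ?thesis unfolding gT using np by (simp add: diff_divide_distrib)
  qed
  define C where "C = norm w * (1 - r') / (-1 - r')"
  have TH: "theta_star (D i) (\<mu> i) (\<Sigma> i) r' = Some (\<theta> i)" using A2_theta[of i] unfolding r'_def .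
  have cases: "S p = {} \<or> (r' < -1 \<and> \<theta> i = C\<^sup>2)"
  proof -
    consider (m0) "\<mu> i = 0" | (b0) "\<mu> i \<noteq> 0" "D i = 0" | (bn) "\<mu> i \<noteq> 0" "D i < 0"
      | (bp) "\<mu> i \<noteq> 0" "D i > 0" by force
    then show ?thesis
    proof cases
      case m0
      have "y = 0" unfolding y_def m0 by simp
      then have "w = 0" unfolding w_def by simp
      then have C0: "C = 0" unfolding C_def by simp
      have "r' < -1 \<and> \<theta> i = 0" using TH r'nz m0 unfolding theta_star_def Let_def
        by (auto split: if_splits)
      then show ?thesis using C0 by simp
    next
      case b0
      have th: "\<theta> i = (norm w)\<^sup>2" using TH r'nz b0 qw unfolding theta_star_def Let_def
        by (auto split: if_splits)
      have "S p = {}"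
      proof (rule ccontr)
        assume "S p \<noteq> {}"
        then obtain x where x: "x \<in> S p" by blast
        have xnz: "x \<noteq> 0" using Sgt[OF x] X(4) by auto
        have "g i x > norm w" using Sgt[OF x] th by simp
        moreover have "g i x \<le> norm w" using gle[OF xnz] b0 by simp
        ultimately show False by simp
      qed
      then show ?thesis by simp
    next
      case bn
      define \<rho> where "\<rho> = lambda_min (\<Sigma> i)"
      have rho: "\<rho> > 0" "\<And>x. \<rho> * (norm x)\<^sup>2 \<le> x \<bullet> (\<Sigma> i *v x)"
        unfolding \<rho>_def using lambda_min_facts[OF ellip(4)[of i]] by auto
      define K where "K = (norm (\<mu> i))\<^sup>2 / \<rho>"
      have muy: "\<mu> i \<bullet> y = (norm w)\<^sup>2" using qw unfolding quad_inv_def y_def by simp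
      have qK: "(norm w)\<^sup>2 \<le> K"
      proof (cases "w = 0")
        case True then show ?thesis unfolding K_def using rho by simp
      next
        case False
        have a1: "\<rho> * (norm y)\<^sup>2 \<le> (norm w)\<^sup>2" using rho(2)[of y] Sy muy by (simp add: inner_commute)
        have a2: "(norm w)\<^sup>2 \<le> norm (\<mu> i) * norm y" using muy norm_cauchy_schwarz[of "\<mu> i" y] by simp
        have "((norm w)\<^sup>2)\<^sup>2 \<le> (norm (\<mu> i) * norm y)\<^sup>2"
          using a2 by (intro power_mono) auto
        also have "\<dots> = (norm (\<mu> i))\<^sup>2 * (norm y)\<^sup>2" by (simp add: power_mult_distrib)
        finally have a3: "\<rho> * ((norm w)\<^sup>2)\<^sup>2 \<le> (norm (\<mu> i))\<^sup>2 * (\<rho> * (norm y)\<^sup>2)"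
          using rho(1) by (simp add: mult_left_mono algebra_simps)
        also have "\<dots> \<le> (norm (\<mu> i))\<^sup>2 * (norm w)\<^sup>2" using a1 by (simp add: mult_left_mono)
        finally have "\<rho> * (norm w)\<^sup>2 * (norm w)\<^sup>2 \<le> (norm (\<mu> i))\<^sup>2 * (norm w)\<^sup>2"
          by (simp add: power2_eq_square algebra_simps)
        then have "\<rho> * (norm w)\<^sup>2 \<le> (norm (\<mu> i))\<^sup>2" using False by simp
        then show ?thesis unfolding K_def using rho(1) by (simp add: pos_le_divide_eq mult.commute)
      qed
      have thq: "\<theta> i \<ge> (norm w)\<^sup>2"
      proof -
        have q0: "(norm w)\<^sup>2 \<ge> 0" by simp
        consider (a) "r' \<le> -2" | (b) "-2 < r'" "r' < -1" | (c) "r' \<ge> -1" by linarith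
        then show ?thesis
        proof cases
          case a
          then have th: "\<theta> i = 1 / (- 1 - r') * ((norm w)\<^sup>2 - (2 + r') * K)"
            using TH r'nz bn qw unfolding theta_star_def Let_def K_def \<rho>_def by (auto split: if_splits)
          have "(2 + r') * ((norm w)\<^sup>2 - K) \<ge> 0" using a qK by (simp add: mult_nonpos_nonpos)
          then have "(norm w)\<^sup>2 - (2 + r') * K \<ge> (norm w)\<^sup>2 * (- 1 - r')" by (simp add: algebra_simps)
          then show ?thesis unfolding th using a by (simp add: pos_le_divide_eq mult.commute)
        next
          case b
          then have th: "\<theta> i = (norm w)\<^sup>2 / (- 1 - r')"
            using TH r'nz bn qw unfolding theta_star_def Let_def by (auto split: if_splits)
          have "(norm w)\<^sup>2 * (- 1 - r') \<le> (norm w)\<^sup>2" using b q0 by (simp add: mult_left_le)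
          then show ?thesis unfolding th using b by (simp add: pos_le_divide_eq)
        next
          case c
          then have th: "\<theta> i = (norm w)\<^sup>2 + (2 + r') * K"
            using TH r'nz bn qw unfolding theta_star_def Let_def K_def \<rho>_def by (auto split: if_splits)
          have "K \<ge> 0" unfolding K_def using rho(1) by simp
          then show ?thesis unfolding th using c by simp
        qed
      qed
      have "S p = {}"
      proof (rule ccontr)
        assume "S p \<noteq> {}"
        then obtain x where x: "x \<in> S p" by blast
        have xnz: "x \<noteq> 0" using Sgt[OF x] X(4) by auto
        have "sqrt (\<theta> i) \<ge> norm w" using thq real_le_rsqrt by simp
        then have "g i x > norm w" using Sgt[OF x] by simp
        moreover have "D i / norm (T *v x) < 0" using bn Tnz[OF xnz] by (simp add: divide_neg_pos)
        ultimately show False using gle[OF xnz] by simp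
      qed
      then show ?thesis by simp
    next
      case bp
      have muy: "\<mu> i \<bullet> y = (norm w)\<^sup>2" using qw unfolding quad_inv_def y_def by simp
      have ynz: "y \<noteq> 0" using Sy bp(1) by auto
      have wnz: "w \<noteq> 0"
      proof -
        have "(norm w)\<^sup>2 = y \<bullet> (\<Sigma> i *v y)" using muy Sy by (simp add: inner_commute)
        then have "(norm w)\<^sup>2 > 0" using pdS[OF ynz] by simp
        then show ?thesis by auto
      qed
      have nmu: "norm (\<mu> i) > 0" using bp(1) by simp
      have nw: "norm w > 0" using wnz by simp
      have Sup: "Sup {(\<mu> i \<bullet> x) / (norm (\<mu> i) * sqrt (x \<bullet> (\<Sigma> i *v x))) | x. norm x = 1} = norm w / norm (\<mu> i)"
      proof (rule cSup_eq_maximum)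
        define x1 where "x1 = (1 / norm y) *\<^sub>R y"
        have ny: "norm y > 0" using ynz by simp
        have nx1: "norm x1 = 1" unfolding x1_def using ny by simp
        have Tx1: "T *v x1 = (1 / norm y) *\<^sub>R w" unfolding x1_def w_def by (simp add: matrix_vector_mult_scaleR)
        have "(\<mu> i \<bullet> x1) / (norm (\<mu> i) * sqrt (x1 \<bullet> (\<Sigma> i *v x1)))
            = ((norm w)\<^sup>2 / norm y) / (norm (\<mu> i) * (norm w / norm y))"
          unfolding NT Tx1 unfolding x1_def using ny muy by simp
        also have "\<dots> = norm w / norm (\<mu> i)" using ny nw by (simp add: field_simps power2_eq_square)
        finally show "norm w / norm (\<mu> i) \<in> {(\<mu> i \<bullet> x) / (norm (\<mu> i) * sqrt (x \<bullet> (\<Sigma> i *v x))) | x. norm x = 1}"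
          using nx1 by (metis (mono_tags, lifting) mem_Collect_eq)
      next
        fix z assume "z \<in> {(\<mu> i \<bullet> x) / (norm (\<mu> i) * sqrt (x \<bullet> (\<Sigma> i *v x))) | x. norm x = 1}"
        then obtain x where x: "norm x = 1" and z: "z = (\<mu> i \<bullet> x) / (norm (\<mu> i) * sqrt (x \<bullet> (\<Sigma> i *v x)))" by blast
        have xnz: "x \<noteq> 0" using x by auto
        have nT: "norm (T *v x) > 0" using Tnz[OF xnz] by simp
        have "\<mu> i \<bullet> x \<le> norm w * norm (T *v x)" unfolding muw by (rule norm_cauchy_schwarz)
        then have "z \<le> (norm w * norm (T *v x)) / (norm (\<mu> i) * norm (T *v x))"
          unfolding z NT using nT nmu by (intro divide_right_mono) auto
        also have "\<dots> = norm w / norm (\<mu> i)" using nT by simp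
        finally show "z \<le> norm w / norm (\<mu> i)" .
      qed
      have lmu: "lambda_mu_min (\<mu> i) (\<Sigma> i) = (norm (\<mu> i))\<^sup>2 / (norm w)\<^sup>2"
        unfolding lambda_mu_min_def Sup by (simp add: power_divide)
      have ro: "(norm (\<mu> i))\<^sup>2 / ((norm w)\<^sup>2 * ((norm (\<mu> i))\<^sup>2 / (norm w)\<^sup>2)) = 1"
        using nmu nw by simp
      have c1: "sqrt ((norm (\<mu> i))\<^sup>2 / (norm w)\<^sup>2) = norm (\<mu> i) / norm w"
        by (simp add: real_sqrt_divide)
      have c2: "(- r') * norm (\<mu> i) / (norm (\<mu> i) / norm w) = (- r') * norm w" using nmu by simp
      have c3: "(2 + r') * (norm (\<mu> i))\<^sup>2 / ((norm (\<mu> i))\<^sup>2 / (norm w)\<^sup>2) + (- 1 - r') * (norm w)\<^sup>2 = (norm w)\<^sup>2"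
        using nmu by (simp add: field_simps)
      have TH2: "r' < -1 \<and> \<theta> i = (((- r') * norm (\<mu> i) / sqrt ((norm (\<mu> i))\<^sup>2 / (norm w)\<^sup>2)
            + sqrt ((2 + r') * (norm (\<mu> i))\<^sup>2 / ((norm (\<mu> i))\<^sup>2 / (norm w)\<^sup>2) + (- 1 - r') * (norm w)\<^sup>2)) / (- 1 - r'))\<^sup>2"
        using TH r'nz bp unfolding theta_star_def Let_def lmu qw ro by (auto split: if_splits)
      have "((- r') * norm (\<mu> i) / sqrt ((norm (\<mu> i))\<^sup>2 / (norm w)\<^sup>2)
            + sqrt ((2 + r') * (norm (\<mu> i))\<^sup>2 / ((norm (\<mu> i))\<^sup>2 / (norm w)\<^sup>2) + (- 1 - r') * (norm w)\<^sup>2)) / (- 1 - r') = C"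
        unfolding c1 c2 c3 C_def by (simp add: algebra_simps)
      then show ?thesis using TH2 by simp
    qed
  qed
  show "concave_on (convex hull (S p)) (\<lambda>x. F i (g i x))"
  proof (cases "S p = {}")
    case True then show ?thesis by (simp add: concave_on_iff)
  next
    case False
    then have r'lt: "r' < -1" and thC: "\<theta> i = C\<^sup>2" using cases by auto
    have r'neg: "r' < 0" using r'lt by simp
    have C0: "C \<ge> 0" unfolding C_def using r'lt by simp
    have sqC: "sqrt (\<theta> i) = C" using thC C0 by simp
    define M0 where "M0 = max C \<tau>"
    define W where "W = {x \<in> X. g i x > M0}"
    have SW: "S p \<subseteq> W" using Sgt sqC unfolding W_def M0_def by auto
    have Wnz: "x \<noteq> 0" if "x \<in> W" for x using that X(4) unfolding W_def by auto
    have Wg: "g i x > M0" if "x \<in> W" for x using that unfolding W_def by auto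
    have convW: "convex W"
    proof (rule convexI)
      fix x z :: "real^'n" and u v :: real
      assume x: "x \<in> W" and z: "z \<in> W" and u: "0 \<le> u" and v: "0 \<le> v" and uv: "u + v = 1"
      define c where "c = u *\<^sub>R x + v *\<^sub>R z"
      have cX: "c \<in> X" unfolding c_def using x z u v uv X(3) unfolding W_def by (auto dest: convexD)
      have cnz: "c \<noteq> 0" using cX X(4) by auto
      have nx: "norm (T *v x) > 0" using Tnz[OF Wnz[OF x]] by simp
      have nz: "norm (T *v z) > 0" using Tnz[OF Wnz[OF z]] by simp
      have nc: "norm (T *v c) > 0" using Tnz[OF cnz] by simp
      have lx: "D i - w \<bullet> (T *v x) > M0 * norm (T *v x)"
        using Wg[OF x] nx unfolding gT by (simp add: pos_less_divide_eq)
      have lz: "D i - w \<bullet> (T *v z) > M0 * norm (T *v z)"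
        using Wg[OF z] nz unfolding gT by (simp add: pos_less_divide_eq)
      have Tc: "T *v c = u *\<^sub>R (T *v x) + v *\<^sub>R (T *v z)"
        unfolding c_def by (simp add: matrix_vector_right_distrib matrix_vector_mult_scaleR)
      have lc: "D i - w \<bullet> (T *v c) = u * (D i - w \<bullet> (T *v x)) + v * (D i - w \<bullet> (T *v z))"
      proof -
        have "u * D i + v * D i = D i" using uv by (metis distrib_right mult_1)
        then show ?thesis unfolding Tc by (simp add: inner_add_right algebra_simps)
      qed
      have "norm (T *v c) \<le> u * norm (T *v x) + v * norm (T *v z)"
        unfolding Tc using u v by (metis abs_of_nonneg norm_scaleR norm_triangle_ineq)
      then have Mn: "M0 * norm (T *v c) \<le> u * (M0 * norm (T *v x)) + v * (M0 * norm (T *v z))"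
        using C0 unfolding M0_def by (smt (verit) mult_left_mono distrib_left mult.left_commute)
      have "u * (M0 * norm (T *v x)) + v * (M0 * norm (T *v z)) < u * (D i - w \<bullet> (T *v x)) + v * (D i - w \<bullet> (T *v z))"
      proof (cases "u = 0")
        case True then show ?thesis using uv lz by simp
      next
        case False
        then have "u * (M0 * norm (T *v x)) < u * (D i - w \<bullet> (T *v x))" using u lx by simp
        moreover have "v * (M0 * norm (T *v z)) \<le> v * (D i - w \<bullet> (T *v z))" using v lz by (simp add: mult_left_mono)
        ultimately show ?thesis by simp
      qed
      then have "D i - w \<bullet> (T *v c) > M0 * norm (T *v c)" using Mn lc by simp
      then have "g i c > M0" unfolding gT using nc by (simp add: pos_less_divide_eq)
      then show "u *\<^sub>R x + v *\<^sub>R z \<in> W" using cX unfolding W_def c_def by simp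
    qed
    have M0C: "M0 \<ge> C" "M0 \<ge> 0" "M0 \<ge> \<tau>" unfolding M0_def using C0 by auto
    have hconv: "g i (u *\<^sub>R x + v *\<^sub>R z) powr r' \<le> u * g i x powr r' + v * g i z powr r'"
      if x: "x \<in> W" and z: "z \<in> W" and u: "0 \<le> u" and v: "0 \<le> v" and uv: "u + v = 1" for x z u v
    proof -
      have lin: "T *v x + t *\<^sub>R (T *v z - T *v x) = T *v ((1 - t) *\<^sub>R x + t *\<^sub>R z)" for t
        by (simp add: matrix_vector_right_distrib matrix_vector_mult_scaleR matrix_vector_mult_diff_distrib algebra_simps)
      have inW: "(1 - t) *\<^sub>R x + t *\<^sub>R z \<in> W" if "t \<in> {0..1}" for t
        using convexD[OF convW x z, of "1 - t" t] that by auto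
      have cv: "convex_on {0..1} (\<lambda>t. ((D i - w \<bullet> (T *v x + t *\<^sub>R (T *v z - T *v x))) / norm (T *v x + t *\<^sub>R (T *v z - T *v x))) powr r')"
      proof (rule seg_convex[where r = r' and C = M0])
        show "r' < -1" by fact
        show "M0 \<ge> 0" using M0C by simp
        show "norm w * (1 - r') / (-1 - r') \<le> M0" using M0C C_def by simp
        fix t :: real assume t: "t \<in> {0..1}"
        show "T *v x + t *\<^sub>R (T *v z - T *v x) \<noteq> 0" unfolding lin using Tnz[OF Wnz[OF inW[OF t]]] .
        show "(D i - w \<bullet> (T *v x + t *\<^sub>R (T *v z - T *v x))) / norm (T *v x + t *\<^sub>R (T *v z - T *v x)) > M0"
          unfolding lin gT[symmetric] by (rule Wg[OF inW[OF t]])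
      qed
      have "(\<lambda>t. ((D i - w \<bullet> (T *v x + t *\<^sub>R (T *v z - T *v x))) / norm (T *v x + t *\<^sub>R (T *v z - T *v x))) powr r')
          = (\<lambda>t. g i ((1 - t) *\<^sub>R x + t *\<^sub>R z) powr r')"
        unfolding lin gT ..
      with cv have cv': "convex_on {0..1} (\<lambda>t. g i ((1 - t) *\<^sub>R x + t *\<^sub>R z) powr r')" by simp
      have v1: "v \<le> 1" using u uv by simp
      have "g i ((1 - ((1 - v) * 0 + v * 1)) *\<^sub>R x + ((1 - v) * 0 + v * 1) *\<^sub>R z) powr r'
           \<le> (1 - v) * g i ((1 - 0) *\<^sub>R x + 0 *\<^sub>R z) powr r' + v * g i ((1 - 1) *\<^sub>R x + 1 *\<^sub>R z) powr r'"
        using convex_onD[OF cv', of v 0 1] v v1 by simp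
      moreover have "1 - v = u" using uv by simp
      ultimately show ?thesis by simp
    qed
    have conc\<phi>: "concave_on {0<..tss i} (\<lambda>s. F i (s powr (1 / r')))"
      using RC r'neg unfolding revealed_concave_def by simp
    have hrange: "0 < g i x powr r' \<and> g i x powr r' < tss i" if x: "x \<in> W" for x
    proof -
      have gt: "g i x > \<tau>" using Wg[OF x] M0C by simp
      have "g i x powr r' < \<tau> powr r'" by (rule powr_less_mono2_neg[OF r'neg taupos gt])
      also have "\<tau> powr r' = tss i" unfolding \<tau>_def powr_powr using r'nz tss by simp
      finally show ?thesis using gt taupos by simp
    qed
    have gback: "F i (g i x) = F i ((g i x powr r') powr (1 / r'))" if x: "x \<in> W" for x
    proof -
      have "g i x > 0" using Wg[OF x] M0C by simp
      then show ?thesis unfolding powr_powr using r'nz by simp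
    qed
    have concW: "concave_on W (\<lambda>x. F i (g i x))"
      unfolding concave_on_iff
    proof (intro conjI ballI allI impI)
      show "convex W" by fact
      fix x z :: "real^'n" and u v :: real
      assume x: "x \<in> W" and z: "z \<in> W" and u: "0 \<le> u" and v: "0 \<le> v" and uv: "u + v = 1"
      define c where "c = u *\<^sub>R x + v *\<^sub>R z"
      have cW: "c \<in> W" unfolding c_def using convexD[OF convW x z u v uv] .
      define s where "s = u * g i x powr r' + v * g i z powr r'"
      have hc: "g i c powr r' \<le> s" unfolding s_def c_def by (rule hconv[OF x z u v uv])
      have hx: "0 < g i x powr r'" "g i x powr r' < tss i" using hrange[OF x] by auto
      have hz: "0 < g i z powr r'" "g i z powr r' < tss i" using hrange[OF z] by auto
      have sp: "0 < s \<and> s < tss i"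
      proof (cases "u = 0")
        case True then show ?thesis unfolding s_def using uv hz by simp
      next
        case False
        then have up: "u > 0" using u by simp
        have "u * g i x powr r' > 0" using up hx by simp
        moreover have "v * g i z powr r' \<ge> 0" using v hz by simp
        moreover have "u * g i x powr r' < u * tss i" using up hx by simp
        moreover have "v * g i z powr r' \<le> v * tss i" using v hz by (simp add: mult_left_mono)
        moreover have "u * tss i + v * tss i = tss i" using uv by (metis distrib_right mult_1)
        ultimately show ?thesis unfolding s_def by linarith
      qed
      have "F i (g i c) = F i ((g i c powr r') powr (1 / r'))" by (rule gback[OF cW])
      also have "\<dots> \<ge> F i (s powr (1 / r'))"
        by (rule Fmono, rule powr_mono2') (use r'neg hrange[OF cW] hc in auto)
      finally have step1: "F i (g i c) \<ge> F i (s powr (1 / r'))" .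
      have "F i (s powr (1 / r')) \<ge> u * F i ((g i x powr r') powr (1 / r')) + v * F i ((g i z powr r') powr (1 / r'))"
        using conc\<phi> hx hz u v uv unfolding concave_on_iff s_def by auto
      then show "u * F i (g i x) + v * F i (g i z) \<le> F i (g i (u *\<^sub>R x + v *\<^sub>R z))"
        using step1 gback[OF x] gback[OF z] unfolding c_def by simp
    qed
    have "convex hull (S p) \<subseteq> W" using SW convW by (rule hull_minimal)
    then show ?thesis using concW unfolding concave_on_def
      using convex_on_subset convex_convex_hull by blast
  qed
qed

end
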